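(* Let $\rho_{L_AA'B'L_B}$ be a state, with $L_A,L_B$ finite-dimensional of arbitrary size, let $\mathcal{N}_{A'B'\to AB}$ be a bipartite quantum channel, and let $\omega_{L_AABL_B}=\mathcal{N}_{A'B'\to AB}(\rho_{L_AA'B'L_B})$. Then $$E_\kappa(L_AA;BL_B)_\omega\le E_\kappa(L_AA';B'L_B)_\rho+E_\kappa(\mathcal{N}).$$
   Context: $T_X$ is partial transpose on $X$. For a bipartite state $\rho_{CD}$, $E_\kappa(C;D)_\rho=\log W_\kappa(C;D)_\rho$ with $W_\kappa(C;D)_\rho=\inf\{\operatorname{Tr}S_{CD}: S_{CD}\ge0,\ -T_D(S_{CD})\le T_D(\rho_{CD})\le T_D(S_{CD})\}$. For a bipartite channel $\mathcal{N}_{A'B'\to AB}$, its Choi operator is $J^{\mathcal{N}}_{L'_AABL'_B}=\mathcal{N}(|\Upsilon\rangle\langle\Upsilon|_{L'_AA'}\otimes|\Upsilon\rangle\langle\Upsilon|_{B'L'_B})$, $|\Upsilon\rangle_{XY}=\sum_i|i\rangle_X|i\rangle_Y$, $L'_A\simeq A'$, $L'_B\simeq B'$, and $E_\kappa(\mathcal{N})=\log\Gamma_\kappa(\mathcal{N})$ with $\Gamma_\kappa(\mathcal{N})=\inf\{\|\operatorname{Tr}_{AB}Q_{L'_AABL'_B}\|_\infty: Q\ge0,\ -T_{BL'_B}(Q)\le T_{BL'_B}(J^{\mathcal{N}})\le T_{BL'_B}(Q)\}$. *)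

theory Defs
  imports Complex_Main
begin

text \<open>Operators on a finite-dimensional Hilbert space with orthonormal basis indexed
  by a finite type 'i, represented by their matrices in that basis.\<close>
type_synonym 'i op = "'i \<Rightarrow> 'i \<Rightarrow> complex"

definition tr :: "('i::finite) op \<Rightarrow> complex" where
  "tr A = (\<Sum>i\<in>UNIV. A i i)"

definition psd_on :: "'i set \<Rightarrow> 'i op \<Rightarrow> bool" where
  "psd_on S A \<longleftrightarrow> (\<forall>v::'i \<Rightarrow> complex. \<exists>r::real. r \<ge> 0 \<and>
      (\<Sum>i\<in>S. \<Sum>j\<in>S. cnj (v i) * A i j * v j) = complex_of_real r)"

definition psd :: "('i::finite) op \<Rightarrow> bool" where
  "psd A \<longleftrightarrow> psd_on UNIV A"

definition loewner_le :: "('i::finite) op \<Rightarrow> 'i op \<Rightarrow> bool" where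
  "loewner_le A B \<longleftrightarrow> psd (B - A)"

definition is_state :: "('i::finite) op \<Rightarrow> bool" where
  "is_state \<rho> \<longleftrightarrow> psd \<rho> \<and> tr \<rho> = 1"

definition ptrans2 :: "('c \<times> 'd) op \<Rightarrow> ('c \<times> 'd) op" where
  "ptrans2 X = (\<lambda>(c, d) (c', d'). X (c, d') (c', d))"

definition vnorm :: "('i::finite \<Rightarrow> complex) \<Rightarrow> real" where
  "vnorm v = sqrt (\<Sum>i\<in>UNIV. (cmod (v i))\<^sup>2)"

definition opnorm :: "('i::finite) op \<Rightarrow> real" where
  "opnorm A = Sup {vnorm (\<lambda>i. \<Sum>j\<in>UNIV. A i j * v j) | v. vnorm v \<le> 1}"

text \<open>Complete positivity: id_R \<otimes> N is positive for every finite-dimensional reference R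
  (reference basis indexed by {..<n}).\<close>
definition linear_map :: "('i op \<Rightarrow> 'o op) \<Rightarrow> bool" where
  "linear_map N \<longleftrightarrow> (\<forall>a b X Y. N (\<lambda>i j. a * X i j + b * Y i j) = (\<lambda>i j. a * N X i j + b * N Y i j))"

definition completely_positive :: "(('i::finite) op \<Rightarrow> ('o::finite) op) \<Rightarrow> bool" where
  "completely_positive N \<longleftrightarrow> (\<forall>n::nat. \<forall>X :: (nat \<times> 'i) op.
      psd_on ({..<n} \<times> UNIV) X \<longrightarrow>
      psd_on ({..<n} \<times> UNIV) (\<lambda>(r, p) (r', p'). N (\<lambda>i j. X (r, i) (r', j)) p p'))"

definition trace_preserving :: "(('i::finite) op \<Rightarrow> ('o::finite) op) \<Rightarrow> bool" where
  "trace_preserving N \<longleftrightarrow> (\<forall>X. tr (N X) = tr X)"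

definition is_channel :: "(('i::finite) op \<Rightarrow> ('o::finite) op) \<Rightarrow> bool" where
  "is_channel N \<longleftrightarrow> linear_map N \<and> completely_positive N \<and> trace_preserving N"

text \<open>Action of a bipartite channel N_{A'B' \<rightarrow> AB} on L_A A' B' L_B, i.e.
  id_{L_A} \<otimes> N \<otimes> id_{L_B}; systems grouped as (L_A \<times> A') \<times> (B' \<times> L_B).\<close>
definition apply_bip :: "(('a1 \<times> 'b1) op \<Rightarrow> ('a2 \<times> 'b2) op) \<Rightarrow>
    (('la \<times> 'a1) \<times> ('b1 \<times> 'lb)) op \<Rightarrow> (('la \<times> 'a2) \<times> ('b2 \<times> 'lb)) op" where
  "apply_bip N X = (\<lambda>((la, a), (b, lb)) ((la', a'), (b', lb')).
      N (\<lambda>(x, y) (x', y'). X ((la, x), (y, lb)) ((la', x'), (y', lb'))) (a, b) (a', b'))"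

text \<open>Unnormalized maximally entangled operator |\<Upsilon>\<rangle>\<langle>\<Upsilon>|_{L'_A A'} \<otimes> |\<Upsilon>\<rangle>\<langle>\<Upsilon>|_{B' L'_B}.\<close>
definition max_ent :: "(('a1 \<times> 'a1) \<times> ('b1 \<times> 'b1)) op" where
  "max_ent = (\<lambda>((l, x), (y, m)) ((l', x'), (y', m')).
      (if l = x \<and> l' = x' \<and> y = m \<and> y' = m' then 1 else 0))"

definition choi :: "(('a1 \<times> 'b1) op \<Rightarrow> ('a2 \<times> 'b2) op) \<Rightarrow> (('a1 \<times> 'a2) \<times> ('b2 \<times> 'b1)) op" where
  "choi N = apply_bip N max_ent"

definition W_kappa :: "(('c::finite) \<times> ('d::finite)) op \<Rightarrow> real" where
  "W_kappa \<rho> = Inf {Re (tr S) | S. psd S \<and> loewner_le (- ptrans2 S) (ptrans2 \<rho>)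
                                   \<and> loewner_le (ptrans2 \<rho>) (ptrans2 S)}"

definition E_kappa :: "(('c::finite) \<times> ('d::finite)) op \<Rightarrow> real" where
  "E_kappa \<rho> = log 2 (W_kappa \<rho>)"

definition ptrace_AB :: "((('la \<times> 'a::finite) \<times> ('b::finite \<times> 'lb))) op \<Rightarrow> ('la \<times> 'lb) op" where
  "ptrace_AB Q = (\<lambda>(la, lb) (la', lb'). \<Sum>a\<in>UNIV. \<Sum>b\<in>UNIV. Q ((la, a), (b, lb)) ((la', a), (b, lb')))"

definition Gamma_kappa :: "((('a1::finite) \<times> ('b1::finite)) op \<Rightarrow> (('a2::finite) \<times> ('b2::finite)) op) \<Rightarrow> real" where
  "Gamma_kappa N = Inf {opnorm (ptrace_AB Q) | Q. psd Q
      \<and> loewner_le (- ptrans2 Q) (ptrans2 (choi N)) \<and> loewner_le (ptrans2 (choi N)) (ptrans2 Q)}"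

definition E_kappa_ch :: "((('a1::finite) \<times> ('b1::finite)) op \<Rightarrow> (('a2::finite) \<times> ('b2::finite)) op) \<Rightarrow> real" where
  "E_kappa_ch N = log 2 (Gamma_kappa N)"

end

theory Submission
  imports Defs "HOL-Library.Complex_Order" "HOL-Analysis.L2_Norm"
begin

definition qf :: "'i set \<Rightarrow> 'i op \<Rightarrow> ('i \<Rightarrow> complex) \<Rightarrow> complex" where
  "qf S A v = (\<Sum>i\<in>S. \<Sum>j\<in>S. cnj (v i) * A i j * v j)"

lemma nonneg_iff_ofreal: "(0::complex) \<le> z \<longleftrightarrow> (\<exists>r::real. r \<ge> 0 \<and> z = complex_of_real r)"
proof
  assume "0 \<le> z" then show "\<exists>r::real. r \<ge> 0 \<and> z = complex_of_real r"
    by (intro exI[of _ "Re z"]) (auto simp: less_eq_complex_def complex_eq_iff)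
qed (auto simp: less_eq_complex_def)

lemma psd_on_iff: "psd_on S A \<longleftrightarrow> (\<forall>v. 0 \<le> qf S A v)"
  unfolding psd_on_def qf_def nonneg_iff_ofreal by metis

lemma psd_iff: "psd A \<longleftrightarrow> (\<forall>v. 0 \<le> qf UNIV A v)"
  unfolding psd_def psd_on_iff ..

lemma qf_delta2:
  assumes "finite S" "a \<in> S"
  shows "qf S A (\<lambda>i. v i + (if i = a then c else 0)) =
    qf S A v + cnj c * (\<Sum>j\<in>S. A a j * v j) + (\<Sum>i\<in>S. cnj (v i) * A i a) * c + cnj c * A a a * c"
proof -
  have e: "cnj (v i + (if i = a then c else 0)) * A i j * (v j + (if j = a then c else 0)) =
     cnj (v i) * A i j * v j + (if i = a then cnj c * A a j * v j else 0)
     + (if j = a then cnj (v i) * A i a * c else 0)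
     + (if i = a then (if j = a then cnj c * A a a * c else 0) else 0)" for i j
    by (auto simp: algebra_simps)
  have z: "(\<Sum>j\<in>S. if P then f j else 0) = (if P then sum f S else 0)" for P and f :: "'a \<Rightarrow> complex"
    by simp
  show ?thesis
    unfolding qf_def e using assms
    by (simp add: sum.distrib sum_distrib_left sum_distrib_right mult.assoc z)
qed

lemma qf_delta1:
  assumes "finite S" "a \<in> S"
  shows "qf S A (\<lambda>i. if i = a then c else 0) = cnj c * A a a * c"
  using qf_delta2[OF assms, of A "\<lambda>_. 0" c] by (simp add: qf_def)

lemma psd_on_diag: assumes "psd_on S A" "finite S" "a \<in> S" shows "0 \<le> A a a"
proof -
  have "0 \<le> qf S A (\<lambda>i. if i = a then 1 else 0)" using assms psd_on_iff by blast
  then show ?thesis using qf_delta1[OF assms(2,3), of A 1] by simp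
qed

lemma sum_delta_r: fixes f :: "_ \<Rightarrow> complex" assumes "finite S" shows "(\<Sum>k\<in>S. f k * (if k = i then 1 else 0)) = (if i \<in> S then f i else 0)"
proof -
  have "(\<Sum>k\<in>S. f k * (if k = i then 1 else 0)) = (\<Sum>k\<in>S. if k = i then f k else 0)"
    by (rule sum.cong) auto
  then show ?thesis using assms by simp
qed
lemma sum_delta_l: fixes f :: "_ \<Rightarrow> complex" assumes "finite S" shows "(\<Sum>k\<in>S. cnj (if k = i then 1 else 0) * f k) = (if i \<in> S then f i else 0)"
proof -
  have "(\<Sum>k\<in>S. cnj (if k = i then 1 else 0) * f k) = (\<Sum>k\<in>S. if k = i then f k else 0)"
    by (rule sum.cong) auto
  then show ?thesis using assms by simp
qed

lemma psd_on_herm: assumes "psd_on S A" "finite S" "i \<in> S" "j \<in> S" shows "A j i = cnj (A i j)"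
proof (cases "i = j")
  case True
  then show ?thesis using psd_on_diag[OF assms(1,2,3)] by (simp add: less_eq_complex_def complex_eq_iff)
next
  case False
  define d where "d = (\<lambda>k. if k = i then 1 else (0::complex))"
  have q: "qf S A (\<lambda>k. d k + (if k = j then c else 0)) = A i i + cnj c * A j i + A i j * c + cnj c * A j j * c" for c
  proof -
    have 1: "qf S A d = A i i" using qf_delta1[OF assms(2,3), of A 1] by (simp add: d_def)
    have 2: "(\<Sum>k\<in>S. A j k * d k) = A j i" unfolding d_def using sum_delta_r[OF assms(2)] assms(3) by simp
    have 3: "(\<Sum>k\<in>S. cnj (d k) * A k j) = A i j" unfolding d_def using sum_delta_l[OF assms(2)] assms(3) by simp
    show ?thesis unfolding qf_delta2[OF assms(2,4)] 1 2 3 by simp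
  qed
  have p: "0 \<le> qf S A v" for v using assms(1) unfolding psd_on_iff by blast
  have ii: "0 \<le> A i i" "0 \<le> A j j" using psd_on_diag[OF assms(1,2,3)] psd_on_diag[OF assms(1,2,4)] by auto
  have 1: "0 \<le> A i i + cnj 1 * A j i + A i j * 1 + cnj 1 * A j j * 1"
    using p[of "\<lambda>k. d k + (if k = j then 1 else 0)"] unfolding q .
  have 2: "0 \<le> A i i + cnj \<i> * A j i + A i j * \<i> + cnj \<i> * A j j * \<i>"
    using p[of "\<lambda>k. d k + (if k = j then \<i> else 0)"] unfolding q .
  have "Re (A j i) = Re (A i j)" "Im (A j i) = - Im (A i j)"
    using 1 2 ii unfolding less_eq_complex_def by simp_all
  then show ?thesis by (simp add: complex_eq_iff)
qed

lemma psd_on_real_diag: assumes "psd_on S A" "finite S" "a \<in> S" shows "cnj (A a a) = A a a"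
  using psd_on_herm[OF assms assms(3)] by simp

lemma qf_diff: "qf S (\<lambda>i j. A i j - B i j) v = qf S A v - qf S B v"
  by (simp add: qf_def algebra_simps sum_subtractf)

lemma psd_on_schur:
  assumes "psd_on S A" "finite S" "a \<in> S"
  shows "psd_on S (\<lambda>i j. A i j - A i a * A a j / A a a)"
  unfolding psd_on_iff
proof
  fix v
  define s where "s = (\<Sum>j\<in>S. A a j * v j)"
  define c where "c = - s / A a a"
  have h: "(\<Sum>i\<in>S. cnj (v i) * A i a) = cnj s"
    unfolding s_def by (simp add: psd_on_herm[OF assms(1,2) _ assms(3)] mult.commute)
  have r: "cnj (A a a) = A a a" using psd_on_real_diag[OF assms] .
  have qB: "qf S (\<lambda>i j. A i a * A a j / A a a) v = cnj s * s / A a a"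
  proof -
    have "cnj s * s / A a a = (\<Sum>i\<in>S. cnj (v i) * A i a) * (\<Sum>j\<in>S. A a j * v j) / A a a"
      unfolding h s_def[symmetric] ..
    also have "\<dots> = (\<Sum>i\<in>S. \<Sum>j\<in>S. cnj (v i) * A i a * (A a j * v j)) / A a a"
      by (simp only: sum_product)
    also have "\<dots> = qf S (\<lambda>i j. A i a * A a j / A a a) v"
      unfolding qf_def sum_divide_distrib by (intro sum.cong refl) (simp add: divide_inverse ac_simps)
    finally show ?thesis by (rule sym)
  qed
  have "qf S A (\<lambda>i. v i + (if i = a then c else 0)) = qf S A v - cnj s * s / A a a"
    unfolding qf_delta2[OF assms(2,3)] h s_def[symmetric] c_def
    using r by (cases "A a a = 0") (simp_all add: field_simps)
  moreover have "0 \<le> qf S A (\<lambda>i. v i + (if i = a then c else 0))" using assms(1) unfolding psd_on_iff by blast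
  ultimately show "0 \<le> qf S (\<lambda>i j. A i j - A i a * A a j / A a a) v"
    unfolding qf_diff qB by simp
qed

lemma psd_on_zero_row:
  assumes "psd_on S A" "finite S" "a \<in> S" "j \<in> S" "A a a = 0"
  shows "A a j = 0"
proof (rule ccontr)
  assume nz: "A a j \<noteq> 0"
  then have ja: "j \<noteq> a" using assms by auto
  define m where "m = (Re (A a j))\<^sup>2 + (Im (A a j))\<^sup>2"
  have m: "m > 0" using nz by (simp add: m_def complex_eq_iff sum_power2_gt_zero_iff)
  define t where "t = (Re (A j j) + 1) / (2 * m)"
  define c where "c = - complex_of_real t * A a j"
  define d where "d = (\<lambda>k. if k = j then 1 else (0::complex))"
  have q: "qf S A (\<lambda>k. d k + (if k = a then c else 0)) = A j j + cnj c * A a j + A j a * c + cnj c * A a a * c"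
  proof -
    have 1: "qf S A d = A j j" using qf_delta1[OF assms(2,4), of A 1] by (simp add: d_def)
    have 2: "(\<Sum>k\<in>S. A a k * d k) = A a j" unfolding d_def using sum_delta_r[OF assms(2)] assms(4) by simp
    have 3: "(\<Sum>k\<in>S. cnj (d k) * A k a) = A j a" unfolding d_def using sum_delta_l[OF assms(2)] assms(4) by simp
    show ?thesis unfolding qf_delta2[OF assms(2,3)] 1 2 3 by simp
  qed
  have h: "A j a = cnj (A a j)" using psd_on_herm[OF assms(1,2,3,4)] .
  have "Re (cnj c * A a j + A j a * c) = - 2 * t * m"
    unfolding c_def h m_def by (simp add: algebra_simps power2_eq_square)
  also have "\<dots> = - (Re (A j j) + 1)" using m by (simp add: t_def)
  finally have "Re (qf S A (\<lambda>k. d k + (if k = a then c else 0))) = -1"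
    unfolding q using assms(5) by simp
  moreover have "0 \<le> qf S A (\<lambda>k. d k + (if k = a then c else 0))" using assms(1) unfolding psd_on_iff by blast
  ultimately show False by (simp add: less_eq_complex_def)
qed

lemma psd_on_subset:
  assumes "psd_on T K" "finite T" "S \<subseteq> T"
  shows "psd_on S K"
  unfolding psd_on_iff
proof
  fix v
  define w where "w = (\<lambda>i. if i \<in> S then v i else (0::complex))"
  have "qf T K w = (\<Sum>i\<in>T. \<Sum>j\<in>S. cnj (w i) * K i j * w j)"
    unfolding qf_def by (intro sum.cong refl sum.mono_neutral_right) (use assms in \<open>auto simp: w_def\<close>)
  also have "\<dots> = (\<Sum>i\<in>S. \<Sum>j\<in>S. cnj (w i) * K i j * w j)"
    by (intro sum.mono_neutral_right) (use assms in \<open>auto simp: w_def\<close>)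
  also have "\<dots> = qf S K v" unfolding qf_def by (intro sum.cong refl) (auto simp: w_def)
  finally show "0 \<le> qf S K v" using assms(1) unfolding psd_on_iff by metis
qed

lemma psd_on_decomp:
  assumes "finite S" "psd_on S K"
  shows "\<exists>(n::nat) \<kappa>. \<forall>i\<in>S. \<forall>j\<in>S. K i j = (\<Sum>k<n. \<kappa> k i * cnj (\<kappa> k j))"
  using assms
proof (induction S arbitrary: K rule: finite_induct)
  case empty
  then show ?case by auto
next
  case (insert a S)
  let ?T = "insert a S"
  have fT: "finite ?T" using insert by simp
  have aT: "a \<in> ?T" by simp
  define K' where "K' = (\<lambda>i j. K i j - K i a * K a j / K a a)"
  have pK': "psd_on ?T K'" unfolding K'_def by (rule psd_on_schur[OF insert(4) fT aT])
  have "psd_on S K'" by (rule psd_on_subset[OF pK' fT]) auto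
  then obtain n :: nat and \<kappa> where IH: "\<forall>i\<in>S. \<forall>j\<in>S. K' i j = (\<Sum>k<n. \<kappa> k i * cnj (\<kappa> k j))"
    using insert(3) by blast
  have herm: "K j i = cnj (K i j)" if "i \<in> ?T" "j \<in> ?T" for i j
    using psd_on_herm[OF insert(4) fT that] .
  have d0: "0 \<le> K a a" using psd_on_diag[OF insert(4) fT aT] .
  define r where "r = Re (K a a)"
  have Kaa: "K a a = complex_of_real r" "r \<ge> 0" using d0 by (auto simp: r_def less_eq_complex_def complex_eq_iff)
  have row0: "K' a j = 0" "K' j a = 0" if "j \<in> ?T" for j
  proof -
    show "K' a j = 0"
    proof (cases "K a a = 0")
      case True
      then show ?thesis using psd_on_zero_row[OF insert(4) fT aT that True] by (simp add: K'_def)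
    qed (simp add: K'_def)
    show "K' j a = 0"
    proof (cases "K a a = 0")
      case True
      then have "K a j = 0" using psd_on_zero_row[OF insert(4) fT aT that True] by simp
      then have "K j a = 0" using herm[OF aT that] by simp
      then show ?thesis by (simp add: K'_def)
    qed (simp add: K'_def)
  qed
  define \<kappa>2 where "\<kappa>2 = (\<lambda>k i. if k < n then (if i = a then 0 else \<kappa> k i) else K i a / complex_of_real (sqrt r))"
  have "\<forall>i\<in>?T. \<forall>j\<in>?T. K i j = (\<Sum>k<Suc n. \<kappa>2 k i * cnj (\<kappa>2 k j))"
  proof (intro ballI)
    fix i j assume i: "i \<in> ?T" and j: "j \<in> ?T"
    have last: "\<kappa>2 n i * cnj (\<kappa>2 n j) = K i a * K a j / K a a"
    proof -
      have "\<kappa>2 n i * cnj (\<kappa>2 n j) = K i a * cnj (K j a) / (complex_of_real (sqrt r) * complex_of_real (sqrt r))"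
        by (simp add: \<kappa>2_def)
      also have "\<dots> = K i a * K a j / K a a"
        using herm[OF j aT] Kaa by (simp flip: of_real_mult)
      finally show ?thesis .
    qed
    have first: "(\<Sum>k<n. \<kappa>2 k i * cnj (\<kappa>2 k j)) = K' i j"
    proof (cases "i = a \<or> j = a")
      case True
      then show ?thesis using row0 i j by (auto simp: \<kappa>2_def)
    next
      case False
      then have "i \<in> S" "j \<in> S" using i j by auto
      then show ?thesis using IH False by (simp add: \<kappa>2_def)
    qed
    show "K i j = (\<Sum>k<Suc n. \<kappa>2 k i * cnj (\<kappa>2 k j))"
      unfolding sum.lessThan_Suc first last by (simp add: K'_def)
  qed
  then show ?case by blast
qed


lemma psd_gram:
  fixes \<mu> :: "'k \<Rightarrow> ('i::finite) \<Rightarrow> complex"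
  assumes "finite F"
  shows "psd (\<lambda>i j. \<Sum>k\<in>F. \<mu> k i * cnj (\<mu> k j))"
  unfolding psd_iff
proof
  fix v :: "'i \<Rightarrow> complex"
  define z where "z k = (\<Sum>i\<in>UNIV. cnj (v i) * \<mu> k i)" for k
  have "qf UNIV (\<lambda>i j. \<Sum>k\<in>F. \<mu> k i * cnj (\<mu> k j)) v = (\<Sum>i\<in>UNIV. \<Sum>j\<in>UNIV. \<Sum>k\<in>F. cnj (v i) * \<mu> k i * (cnj (\<mu> k j) * v j))"
    unfolding qf_def by (simp add: sum_distrib_left sum_distrib_right mult.assoc)
  also have "\<dots> = (\<Sum>i\<in>UNIV. \<Sum>k\<in>F. \<Sum>j\<in>UNIV. cnj (v i) * \<mu> k i * (cnj (\<mu> k j) * v j))"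
    by (rule sum.cong[OF refl], rule sum.swap)
  also have "\<dots> = (\<Sum>k\<in>F. \<Sum>i\<in>UNIV. \<Sum>j\<in>UNIV. cnj (v i) * \<mu> k i * (cnj (\<mu> k j) * v j))"
    by (rule sum.swap)
  also have "\<dots> = (\<Sum>k\<in>F. z k * cnj (z k))"
    unfolding z_def cnj_sum sum_product by (intro sum.cong refl) (simp add: ac_simps)
  finally have e: "qf UNIV (\<lambda>i j. \<Sum>k\<in>F. \<mu> k i * cnj (\<mu> k j)) v = (\<Sum>k\<in>F. z k * cnj (z k))" .
  have "0 \<le> z k * cnj (z k)" for k by (simp add: complex_mult_cnj less_eq_complex_def)
  then show "0 \<le> qf UNIV (\<lambda>i j. \<Sum>k\<in>F. \<mu> k i * cnj (\<mu> k j)) v" unfolding e by (simp add: sum_nonneg)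
qed

lemma sum_swap3: "(\<Sum>a\<in>A. \<Sum>b\<in>B. \<Sum>c\<in>C. f a b c) = (\<Sum>b\<in>B. \<Sum>c\<in>C. \<Sum>a\<in>A. f a b c)"
proof -
  have "(\<Sum>a\<in>A. \<Sum>b\<in>B. \<Sum>c\<in>C. f a b c) = (\<Sum>b\<in>B. \<Sum>a\<in>A. \<Sum>c\<in>C. f a b c)"
    by (rule sum.swap)
  also have "\<dots> = (\<Sum>b\<in>B. \<Sum>c\<in>C. \<Sum>a\<in>A. f a b c)"
    by (rule sum.cong[OF refl], rule sum.swap)
  finally show ?thesis .
qed

lemma psd_decompU:
  fixes K :: "('i::finite) op"
  assumes "psd K"
  shows "\<exists>(n::nat) \<kappa>. \<forall>i j. K i j = (\<Sum>k<n. \<kappa> k i * cnj (\<kappa> k j))"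
  using psd_on_decomp[of UNIV K] assms unfolding psd_def by auto

lemma psd_contract:
  fixes S :: "('p::finite) op" and Q :: "('q::finite) op"
    and f :: "('i::finite) \<Rightarrow> ('x::finite) \<Rightarrow> 'p" and h :: "'i \<Rightarrow> 'x \<Rightarrow> 'q"
  assumes "psd S" "psd Q"
  shows "psd (\<lambda>\<alpha> \<beta>. \<Sum>x\<in>UNIV. \<Sum>x'\<in>UNIV. S (f \<alpha> x) (f \<beta> x') * Q (h \<alpha> x) (h \<beta> x'))"
proof -
  obtain n :: nat and \<sigma> where s: "\<And>i j. S i j = (\<Sum>k<n. \<sigma> k i * cnj (\<sigma> k j))"
    using psd_decompU[OF assms(1)] by blast
  obtain m :: nat and \<kappa> where q: "\<And>i j. Q i j = (\<Sum>k<m. \<kappa> k i * cnj (\<kappa> k j))"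
    using psd_decompU[OF assms(2)] by blast
  define \<mu> where "\<mu> kl \<alpha> = (\<Sum>x\<in>UNIV. \<sigma> (fst kl) (f \<alpha> x) * \<kappa> (snd kl) (h \<alpha> x))" for kl \<alpha>
  have "(\<lambda>\<alpha> \<beta>. \<Sum>x\<in>UNIV. \<Sum>x'\<in>UNIV. S (f \<alpha> x) (f \<beta> x') * Q (h \<alpha> x) (h \<beta> x'))
      = (\<lambda>\<alpha> \<beta>. \<Sum>kl\<in>{..<n} \<times> {..<m}. \<mu> kl \<alpha> * cnj (\<mu> kl \<beta>))"
  proof (intro ext)
    fix \<alpha> \<beta>
    have "(\<Sum>kl\<in>{..<n} \<times> {..<m}. \<mu> kl \<alpha> * cnj (\<mu> kl \<beta>)) =
      (\<Sum>k<n. \<Sum>l<m. \<Sum>x\<in>UNIV. \<Sum>x'\<in>UNIV. \<sigma> k (f \<alpha> x) * \<kappa> l (h \<alpha> x) * (cnj (\<sigma> k (f \<beta> x')) * cnj (\<kappa> l (h \<beta> x'))))"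
    proof -
      have "(\<Sum>kl\<in>{..<n} \<times> {..<m}. \<mu> kl \<alpha> * cnj (\<mu> kl \<beta>)) = (\<Sum>k<n. \<Sum>l<m. \<mu> (k,l) \<alpha> * cnj (\<mu> (k,l) \<beta>))"
        unfolding sum.cartesian_product by (simp add: case_prod_beta)
      then show ?thesis unfolding \<mu>_def by (simp add: sum_product)
    qed
    also have "\<dots> = (\<Sum>k<n. \<Sum>x\<in>UNIV. \<Sum>x'\<in>UNIV. \<Sum>l<m. \<sigma> k (f \<alpha> x) * \<kappa> l (h \<alpha> x) * (cnj (\<sigma> k (f \<beta> x')) * cnj (\<kappa> l (h \<beta> x'))))"
      by (rule sum.cong[OF refl], rule sum_swap3)
    also have "\<dots> = (\<Sum>x\<in>UNIV. \<Sum>x'\<in>UNIV. \<Sum>k<n. \<Sum>l<m. \<sigma> k (f \<alpha> x) * \<kappa> l (h \<alpha> x) * (cnj (\<sigma> k (f \<beta> x')) * cnj (\<kappa> l (h \<beta> x'))))"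
      by (rule sum_swap3)
    also have "\<dots> = (\<Sum>x\<in>UNIV. \<Sum>x'\<in>UNIV. S (f \<alpha> x) (f \<beta> x') * Q (h \<alpha> x) (h \<beta> x'))"
      unfolding s q sum_product by (intro sum.cong refl) (simp add: ac_simps)
    finally show "(\<Sum>x\<in>UNIV. \<Sum>x'\<in>UNIV. S (f \<alpha> x) (f \<beta> x') * Q (h \<alpha> x) (h \<beta> x'))
      = (\<Sum>kl\<in>{..<n} \<times> {..<m}. \<mu> kl \<alpha> * cnj (\<mu> kl \<beta>))" by simp
  qed
  then show ?thesis using psd_gram[of "{..<n} \<times> {..<m}" \<mu>] by simp
qed


definition Emat :: "'i \<Rightarrow> 'i \<Rightarrow> 'i op" where
  "Emat u w = (\<lambda>s t. if s = u \<and> t = w then 1 else 0)"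

lemma linD: assumes "linear_map N"
  shows "N (\<lambda>i j. a * X i j + b * Y i j) = (\<lambda>i j. a * N X i j + b * N Y i j)"
  using assms unfolding linear_map_def by (elim allE)

lemma lin_zero: assumes "linear_map N" shows "N (\<lambda>s t. 0) = (\<lambda>p q. 0)"
  using linD[OF assms, of 0 "\<lambda>_ _. 0" 0 "\<lambda>_ _. 0"] by simp

lemma lin_sum:
  assumes "linear_map N" "finite F"
  shows "N (\<lambda>s t. \<Sum>k\<in>F. c k * M k s t) = (\<lambda>p q. \<Sum>k\<in>F. c k * N (M k) p q)"
  using assms(2)
proof (induction F rule: finite_induct)
  case empty
  then show ?case using lin_zero[OF assms(1)] by simp
next
  case (insert k F)
  have "N (\<lambda>s t. \<Sum>k\<in>insert k F. c k * M k s t) = N (\<lambda>s t. c k * M k s t + 1 * (\<Sum>k\<in>F. c k * M k s t))"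
    using insert by simp
  also have "\<dots> = (\<lambda>p q. c k * N (M k) p q + 1 * N (\<lambda>s t. \<Sum>k\<in>F. c k * M k s t) p q)"
    by (rule linD[OF assms(1)])
  also have "\<dots> = (\<lambda>p q. \<Sum>k\<in>insert k F. c k * N (M k) p q)"
    using insert by simp
  finally show ?case .
qed

lemma lin_expand:
  fixes N :: "('i::finite) op \<Rightarrow> 'o op"
  assumes "linear_map N"
  shows "N X = (\<lambda>p q. \<Sum>u\<in>UNIV. \<Sum>w\<in>UNIV. X u w * N (Emat u w) p q)"
proof -
  have X: "X = (\<lambda>s t. \<Sum>uw\<in>UNIV \<times> UNIV. X (fst uw) (snd uw) * Emat (fst uw) (snd uw) s t)"
  proof (intro ext)
    fix s t
    have "(\<Sum>uw\<in>UNIV \<times> UNIV. X (fst uw) (snd uw) * Emat (fst uw) (snd uw) s t)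
        = (\<Sum>uw\<in>UNIV \<times> UNIV. if uw = (s,t) then X s t else 0)"
      by (intro sum.cong refl) (auto simp: Emat_def)
    then show "X s t = (\<Sum>uw\<in>UNIV \<times> UNIV. X (fst uw) (snd uw) * Emat (fst uw) (snd uw) s t)" by simp
  qed
  have "N X = (\<lambda>p q. \<Sum>uw\<in>UNIV \<times> UNIV. X (fst uw) (snd uw) * N (Emat (fst uw) (snd uw)) p q)"
    by (subst X) (rule lin_sum[OF assms], simp)
  then show ?thesis by (simp add: sum.cartesian_product case_prod_beta)
qed

definition fS :: "(('la \<times> 'a) \<times> ('b \<times> 'lb)) \<Rightarrow> ('x \<times> 'y) \<Rightarrow> (('la \<times> 'x) \<times> ('y \<times> 'lb))" where
  "fS \<alpha> xy = ((fst (fst \<alpha>), fst xy), (snd xy, snd (snd \<alpha>)))"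

definition hQ :: "(('la \<times> 'a) \<times> ('b \<times> 'lb)) \<Rightarrow> ('x \<times> 'y) \<Rightarrow> (('x \<times> 'a) \<times> ('b \<times> 'y))" where
  "hQ \<alpha> xy = ((fst xy, snd (fst \<alpha>)), (fst (snd \<alpha>), snd xy))"

definition star :: "((('la \<times> 'a1::finite) \<times> ('b1::finite \<times> 'lb))) op \<Rightarrow> ((('a1 \<times> 'a2) \<times> ('b2 \<times> 'b1))) op
    \<Rightarrow> ((('la \<times> 'a2) \<times> ('b2 \<times> 'lb))) op" where
  "star S Q = (\<lambda>\<alpha> \<beta>. \<Sum>xy\<in>UNIV. \<Sum>xy'\<in>UNIV. S (fS \<alpha> xy) (fS \<beta> xy') * Q (hQ \<alpha> xy) (hQ \<beta> xy'))"

lemma psd_star: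
  fixes S :: "((('la::finite \<times> 'a1::finite) \<times> ('b1::finite \<times> 'lb::finite))) op"
    and Q :: "((('a1 \<times> 'a2::finite) \<times> ('b2::finite \<times> 'b1))) op"
  assumes "psd S" "psd Q" shows "psd (star S Q)"
  unfolding star_def by (rule psd_contract[OF assms])

lemma choi_E: "choi N ((x,a),(b,y)) ((x',a'),(b',y')) = N (Emat (x,y) (x',y')) (a,b) (a',b')"
proof -
  have "(\<lambda>(xa, ya) (x'a, y'a). max_ent ((x, xa), ya, y) ((x', x'a), y'a, y')) = Emat (x,y) (x',y')"
    by (auto simp: fun_eq_iff Emat_def max_ent_def)
  then show ?thesis by (simp add: choi_def apply_bip_def)
qed

lemma apply_bip_star:
  fixes N :: "(('a1::finite) \<times> ('b1::finite)) op \<Rightarrow> (('a2::finite) \<times> ('b2::finite)) op"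
    and X :: "((('la::finite) \<times> 'a1) \<times> ('b1 \<times> ('lb::finite))) op"
  assumes "linear_map N"
  shows "apply_bip N X = star X (choi N)"
proof (intro ext)
  fix \<alpha> :: "('la \<times> 'a2) \<times> ('b2 \<times> 'lb)" and \<beta> :: "('la \<times> 'a2) \<times> ('b2 \<times> 'lb)"
  obtain la a b lb where \<alpha>: "\<alpha> = ((la,a),(b,lb))" by (metis prod.collapse)
  obtain la' a' b' lb' where \<beta>: "\<beta> = ((la',a'),(b',lb'))" by (metis prod.collapse)
  define blk where "blk = (\<lambda>(x,y) (x',y'). X ((la,x),(y,lb)) ((la',x'),(y',lb')))"
  have "apply_bip N X \<alpha> \<beta> = N blk (a,b) (a',b')"
    by (simp add: \<alpha> \<beta> apply_bip_def blk_def)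
  also have "\<dots> = (\<Sum>u\<in>UNIV. \<Sum>w\<in>UNIV. blk u w * N (Emat u w) (a,b) (a',b'))"
    by (subst lin_expand[OF assms]) simp
  also have "\<dots> = star X (choi N) \<alpha> \<beta>"
    unfolding star_def
    by (intro sum.cong refl) (auto simp: \<alpha> \<beta> blk_def fS_def hQ_def choi_E split: prod.splits)
  finally show "apply_bip N X \<alpha> \<beta> = star X (choi N) \<alpha> \<beta>" .
qed

lemma swap_pairs:
  fixes G :: "('x::finite \<times> 'y::finite) \<Rightarrow> ('x \<times> 'y) \<Rightarrow> 'c::comm_monoid_add"
  shows "(\<Sum>p\<in>UNIV. \<Sum>q\<in>UNIV. G (fst p, snd q) (fst q, snd p)) = (\<Sum>p\<in>UNIV. \<Sum>q\<in>UNIV. G p q)"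
proof -
  define \<phi> :: "('x \<times> 'y) \<times> ('x \<times> 'y) \<Rightarrow> ('x \<times> 'y) \<times> ('x \<times> 'y)"
    where "\<phi> pq = ((fst (fst pq), snd (snd pq)), (fst (snd pq), snd (fst pq)))" for pq
  have "(\<Sum>pq\<in>UNIV \<times> UNIV. G (fst (fst pq), snd (snd pq)) (fst (snd pq), snd (fst pq))) = (\<Sum>pq\<in>UNIV \<times> UNIV. G (fst pq) (snd pq))"
    by (rule sum.reindex_bij_witness[of _ \<phi> \<phi>]) (auto simp: \<phi>_def)
  then show ?thesis by (simp add: sum.cartesian_product case_prod_beta)
qed

lemma ptrans2_star:
  fixes S :: "((('la::finite \<times> 'a1::finite) \<times> ('b1::finite \<times> 'lb::finite))) op"
    and Q :: "((('a1 \<times> 'a2::finite) \<times> ('b2::finite \<times> 'b1))) op"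
  shows "ptrans2 (star S Q) = star (ptrans2 S) (ptrans2 Q)"
proof (intro ext)
  fix \<alpha> \<beta> :: "('la \<times> 'a2) \<times> ('b2 \<times> 'lb)"
  obtain c d where \<alpha>: "\<alpha> = (c, d)" by (metis prod.collapse)
  obtain c' d' where \<beta>: "\<beta> = (c', d')" by (metis prod.collapse)
  define G where "G xy xy' = S (fS (c,d') xy) (fS (c',d) xy') * Q (hQ (c,d') xy) (hQ (c',d) xy')" for xy xy'
  have "star (ptrans2 S) (ptrans2 Q) \<alpha> \<beta> = (\<Sum>p\<in>UNIV. \<Sum>q\<in>UNIV. G (fst p, snd q) (fst q, snd p))"
    unfolding star_def G_def
    by (intro sum.cong refl) (simp add: \<alpha> \<beta> ptrans2_def fS_def hQ_def case_prod_beta)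
  also have "\<dots> = (\<Sum>p\<in>UNIV. \<Sum>q\<in>UNIV. G p q)" by (rule swap_pairs)
  also have "\<dots> = ptrans2 (star S Q) \<alpha> \<beta>"
    unfolding G_def star_def by (simp add: \<alpha> \<beta> ptrans2_def)
  finally show "ptrans2 (star S Q) \<alpha> \<beta> = star (ptrans2 S) (ptrans2 Q) \<alpha> \<beta>" by simp
qed

lemma star_bilin:
  "star (A1 - B1) C1 = star A1 C1 - star B1 C1"
  "star A2 (B2 - C2) = star A2 B2 - star A2 C2"
  "star (- A3) C3 = - star A3 C3"
  "star A4 (- C4) = - star A4 C4"
  by (simp_all add: star_def fun_eq_iff algebra_simps sum.distrib sum_subtractf sum_negf)

lemma qf_add: "qf S (\<lambda>i j. A i j + B i j) v = qf S A v + qf S B v"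
  by (simp add: qf_def algebra_simps sum.distrib)

lemma qf_scale: "qf S (\<lambda>i j. c * A i j) v = c * qf S A v"
  by (simp add: qf_def sum_distrib_left algebra_simps)

lemma psd_add: "psd A \<Longrightarrow> psd B \<Longrightarrow> psd (\<lambda>i j. A i j + B i j)"
  unfolding psd_iff qf_add by (simp add: add_nonneg_nonneg)

lemma psd_scale: "0 \<le> c \<Longrightarrow> psd A \<Longrightarrow> psd (\<lambda>i j. complex_of_real c * A i j)"
  unfolding psd_iff qf_scale by (simp add: mult_nonneg_nonneg less_eq_complex_def)

lemma feas_combine:
  fixes P R :: "((('la::finite \<times> 'a1::finite) \<times> ('b1::finite \<times> 'lb::finite))) op"
    and G K :: "((('a1 \<times> 'a2::finite) \<times> ('b2::finite \<times> 'b1))) op"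
  assumes "psd (P - R)" "psd (R - - P)" "psd (G - K)" "psd (K - - G)"
  shows "psd (star P G - star R K)" "psd (star R K - - star P G)"
proof -
  have s1: "psd (star (P - R) (K - - G))" using psd_star[OF assms(1) assms(4)] .
  have s2: "psd (star (R - - P) (G - K))" using psd_star[OF assms(2) assms(3)] .
  have s3: "psd (star (R - - P) (K - - G))" using psd_star[OF assms(2) assms(4)] .
  have s4: "psd (star (P - R) (G - K))" using psd_star[OF assms(1) assms(3)] .
  have "star P G - star R K = (\<lambda>i j. complex_of_real (1/2) *
      (star (P - R) (K - - G) i j + star (R - - P) (G - K) i j))"
    unfolding star_bilin by (simp add: fun_eq_iff algebra_simps)
  then show "psd (star P G - star R K)"
    using psd_scale[OF _ psd_add[OF s1 s2], of "1/2"] by simp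
  have "star R K - - star P G = (\<lambda>i j. complex_of_real (1/2) *
      (star (R - - P) (K - - G) i j + star (P - R) (G - K) i j))"
    unfolding star_bilin by (simp add: fun_eq_iff algebra_simps)
  then show "psd (star R K - - star P G)"
    using psd_scale[OF _ psd_add[OF s3 s4], of "1/2"] by simp
qed


definition gidx :: "('l1 \<times> 'l2) \<Rightarrow> ('x \<times> 'y) \<Rightarrow> (('l1 \<times> 'x) \<times> ('y \<times> 'l2))" where
  "gidx l xy = ((fst l, fst xy), (snd xy, snd l))"

lemma sum_split4:
  fixes G :: "(('l1::finite \<times> 'x::finite) \<times> ('y::finite \<times> 'l2::finite)) \<Rightarrow> 'c::comm_monoid_add"
  shows "(\<Sum>i\<in>UNIV. G i) = (\<Sum>l\<in>UNIV. \<Sum>xy\<in>UNIV. G (gidx l xy))"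
proof -
  define \<psi> :: "(('l1 \<times> 'x) \<times> ('y \<times> 'l2)) \<Rightarrow> ('l1 \<times> 'l2) \<times> ('x \<times> 'y)"
    where "\<psi> i = ((fst (fst i), snd (snd i)), (snd (fst i), fst (snd i)))" for i
  have "(\<Sum>lxy\<in>UNIV \<times> UNIV. G (gidx (fst lxy) (snd lxy))) = (\<Sum>i\<in>UNIV. G i)"
    by (rule sum.reindex_bij_witness[of _ \<psi> "\<lambda>lxy. gidx (fst lxy) (snd lxy)"]) (auto simp: \<psi>_def gidx_def)
  then show ?thesis by (simp add: sum.cartesian_product case_prod_beta)
qed

lemma tr_ptrans2: "tr (ptrans2 (X :: (('c::finite) \<times> ('d::finite)) op)) = tr X"
  unfolding tr_def ptrans2_def by (simp add: case_prod_beta)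

lemma tr_split: "tr (X :: (('l1::finite \<times> 'x::finite) \<times> ('y::finite \<times> 'l2::finite)) op) =
    (\<Sum>l\<in>UNIV. \<Sum>xy\<in>UNIV. X (gidx l xy) (gidx l xy))"
  unfolding tr_def by (rule sum_split4)

lemma tr_apply_bip:
  fixes N :: "(('a1::finite) \<times> ('b1::finite)) op \<Rightarrow> (('a2::finite) \<times> ('b2::finite)) op"
    and X :: "((('la::finite) \<times> 'a1) \<times> ('b1 \<times> ('lb::finite))) op"
  assumes "trace_preserving N"
  shows "tr (apply_bip N X) = tr X"
proof -
  define blk where "blk l = (\<lambda>(x,y) (x',y'). X ((fst l,x),(y,snd l)) ((fst l,x'),(y',snd l)))" for l :: "'la \<times> 'lb"
  have "tr (apply_bip N X) = (\<Sum>l\<in>UNIV. \<Sum>ab\<in>UNIV. apply_bip N X (gidx l ab) (gidx l ab))"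
    by (rule tr_split)
  also have "\<dots> = (\<Sum>l\<in>UNIV. tr (N (blk l)))"
    unfolding tr_def
    by (intro sum.cong refl) (simp add: apply_bip_def gidx_def blk_def case_prod_beta)
  also have "\<dots> = (\<Sum>l\<in>UNIV. tr (blk l))"
    using assms unfolding trace_preserving_def by simp
  also have "\<dots> = (\<Sum>l\<in>UNIV. \<Sum>xy\<in>UNIV. X (gidx l xy) (gidx l xy))"
    unfolding tr_def
    by (intro sum.cong refl) (simp add: gidx_def blk_def case_prod_beta)
  also have "\<dots> = tr X" by (rule tr_split[symmetric])
  finally show ?thesis .
qed

lemma tr_max_ent: "tr (max_ent :: (('a1::finite \<times> 'a1) \<times> ('b1::finite \<times> 'b1)) op) = of_nat (card (UNIV :: ('a1 \<times> 'b1) set))"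
proof -
  have "tr (max_ent :: (('a1 \<times> 'a1) \<times> ('b1 \<times> 'b1)) op) = (\<Sum>l\<in>(UNIV :: ('a1 \<times> 'b1) set). \<Sum>xy\<in>UNIV. if xy = l then 1 else 0)"
    unfolding tr_split
    by (intro sum.cong refl) (auto simp: max_ent_def gidx_def case_prod_beta prod_eq_iff)
  also have "\<dots> = (\<Sum>l\<in>(UNIV :: ('a1 \<times> 'b1) set). 1)" by simp
  finally show ?thesis by simp
qed

lemma tr_choi:
  fixes N :: "(('a1::finite) \<times> ('b1::finite)) op \<Rightarrow> (('a2::finite) \<times> ('b2::finite)) op"
  assumes "trace_preserving N"
  shows "tr (choi N) = of_nat (card (UNIV :: ('a1 \<times> 'b1) set))"
  unfolding choi_def tr_apply_bip[OF assms] by (rule tr_max_ent)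

lemma ptrace_gidx: "ptrace_AB Q l l' = (\<Sum>ab\<in>UNIV. Q (gidx l ab) (gidx l' ab))"
proof -
  have "ptrace_AB Q l l' = (\<Sum>a\<in>UNIV. \<Sum>b\<in>UNIV. Q ((fst l, a), b, snd l) ((fst l', a), b, snd l'))"
    by (simp add: ptrace_AB_def case_prod_beta)
  also have "\<dots> = (\<Sum>ab\<in>UNIV \<times> UNIV. Q ((fst l, fst ab), snd ab, snd l) ((fst l', fst ab), snd ab, snd l'))"
    unfolding sum.cartesian_product by (simp add: case_prod_beta)
  finally show ?thesis by (simp add: gidx_def)
qed

lemma tr_ptrace: "tr (ptrace_AB (Q :: (('la::finite \<times> 'a::finite) \<times> ('b::finite \<times> 'lb::finite)) op)) = tr Q"
proof -
  have "tr (ptrace_AB Q) = (\<Sum>l\<in>UNIV. \<Sum>ab\<in>UNIV. Q (gidx l ab) (gidx l ab))"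
    by (simp add: tr_def ptrace_gidx)
  also have "\<dots> = tr Q" by (rule tr_split[symmetric])
  finally show ?thesis .
qed


definition mv :: "('i::finite) op \<Rightarrow> ('i \<Rightarrow> complex) \<Rightarrow> 'i \<Rightarrow> complex" where
  "mv A v = (\<lambda>i. \<Sum>j\<in>UNIV. A i j * v j)"

lemma vnorm_L2: "vnorm v = L2_set (\<lambda>i. cmod (v i)) UNIV"
  unfolding vnorm_def L2_set_def ..

lemma vnorm_nonneg: "0 \<le> vnorm v" unfolding vnorm_L2 by simp

lemma cmod_le_vnorm: "cmod (v i) \<le> vnorm (v :: ('i::finite) \<Rightarrow> complex)"
  unfolding vnorm_L2 by (rule member_le_L2_set) auto

lemma vnorm_le_sum: "vnorm (v :: ('i::finite) \<Rightarrow> complex) \<le> (\<Sum>i\<in>UNIV. cmod (v i))"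
  unfolding vnorm_L2 by (rule L2_set_le_sum) auto

lemma vnorm_sq: "(vnorm v)\<^sup>2 = (\<Sum>i\<in>UNIV. (cmod (v i))\<^sup>2)"
  unfolding vnorm_def by (simp add: sum_nonneg)

lemma opnorm_alt: "opnorm A = Sup {vnorm (mv A v) | v. vnorm v \<le> 1}"
  unfolding opnorm_def mv_def ..

lemma opnorm_bdd: "bdd_above {vnorm (mv A v) | v. vnorm v \<le> 1}"
proof (rule bdd_aboveI)
  fix y assume "y \<in> {vnorm (mv A v) | v. vnorm v \<le> 1}"
  then obtain v where y: "y = vnorm (mv A v)" and v: "vnorm v \<le> 1" by blast
  have "y \<le> (\<Sum>i\<in>UNIV. cmod (mv A v i))" unfolding y by (rule vnorm_le_sum)
  also have "\<dots> \<le> (\<Sum>i\<in>UNIV. \<Sum>j\<in>UNIV. cmod (A i j))"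
  proof (rule sum_mono)
    fix i
    have "cmod (mv A v i) \<le> (\<Sum>j\<in>UNIV. cmod (A i j * v j))"
      unfolding mv_def by (rule norm_sum)
    also have "\<dots> \<le> (\<Sum>j\<in>UNIV. cmod (A i j))"
    proof (rule sum_mono)
      fix j
      have "cmod (v j) \<le> 1" using cmod_le_vnorm[of v j] v by linarith
      then show "cmod (A i j * v j) \<le> cmod (A i j)"
        by (simp add: norm_mult mult_left_le)
    qed
    finally show "cmod (mv A v i) \<le> (\<Sum>j\<in>UNIV. cmod (A i j))" .
  qed
  finally show "y \<le> (\<Sum>i\<in>UNIV. \<Sum>j\<in>UNIV. cmod (A i j))" .
qed

lemma opnorm_upper: "vnorm v \<le> 1 \<Longrightarrow> vnorm (mv A v) \<le> opnorm A"
  unfolding opnorm_alt by (rule cSup_upper[OF _ opnorm_bdd]) blast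

lemma vnorm_scale: "vnorm (\<lambda>i. complex_of_real c * v i) = \<bar>c\<bar> * vnorm v"
  unfolding vnorm_L2 by (simp add: norm_mult L2_set_right_distrib)

lemma mv_scale: "mv A (\<lambda>i. complex_of_real c * v i) = (\<lambda>i. complex_of_real c * mv A v i)"
  unfolding mv_def by (simp add: sum_distrib_left algebra_simps)

lemma vnorm_zero_iff: "vnorm (v :: ('i::finite) \<Rightarrow> complex) = 0 \<longleftrightarrow> v = (\<lambda>_. 0)"
  unfolding vnorm_L2 by (simp add: L2_set_eq_0_iff fun_eq_iff)

lemma opnorm_bound: "vnorm (mv A v) \<le> opnorm A * vnorm v"
proof (cases "vnorm v = 0")
  case True
  then have "v = (\<lambda>_. 0)" by (simp add: vnorm_zero_iff)
  then have "mv A v = (\<lambda>_. 0)" by (simp add: mv_def)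
  then show ?thesis using True by (simp add: vnorm_def)
next
  case False
  then have pos: "vnorm v > 0" using vnorm_nonneg[of v] by linarith
  define w where "w = (\<lambda>i. complex_of_real (1 / vnorm v) * v i)"
  have "vnorm w = 1" using pos unfolding w_def vnorm_scale by simp
  then have "vnorm (mv A w) \<le> opnorm A" by (intro opnorm_upper) simp
  moreover have "vnorm (mv A w) = vnorm (mv A v) / vnorm v"
    using pos unfolding w_def mv_scale vnorm_scale by simp
  ultimately show ?thesis using pos by (simp add: field_simps)
qed

lemma cauchy_schwarz_c: "cmod (\<Sum>i\<in>UNIV. cnj (u i) * w i) \<le> vnorm u * vnorm (w :: ('i::finite) \<Rightarrow> complex)"
proof -
  have "cmod (\<Sum>i\<in>UNIV. cnj (u i) * w i) \<le> (\<Sum>i\<in>UNIV. cmod (cnj (u i) * w i))" by (rule norm_sum)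
  also have "\<dots> = (\<Sum>i\<in>UNIV. \<bar>cmod (u i)\<bar> * \<bar>cmod (w i)\<bar>)" by (simp add: norm_mult)
  also have "\<dots> \<le> L2_set (\<lambda>i. cmod (u i)) UNIV * L2_set (\<lambda>i. cmod (w i)) UNIV" by (rule L2_set_mult_ineq)
  finally show ?thesis unfolding vnorm_L2 .
qed

lemma qf_opnorm: "Re (qf UNIV A u) \<le> opnorm A * (\<Sum>i\<in>UNIV. (cmod (u i))\<^sup>2)"
proof -
  have "qf UNIV A u = (\<Sum>i\<in>UNIV. cnj (u i) * mv A u i)"
    unfolding qf_def mv_def by (simp add: sum_distrib_left mult.assoc)
  then have "Re (qf UNIV A u) \<le> cmod (\<Sum>i\<in>UNIV. cnj (u i) * mv A u i)"
    using complex_Re_le_cmod by metis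
  also have "\<dots> \<le> vnorm u * vnorm (mv A u)" by (rule cauchy_schwarz_c)
  also have "\<dots> \<le> vnorm u * (opnorm A * vnorm u)"
    by (rule mult_left_mono[OF opnorm_bound vnorm_nonneg])
  also have "\<dots> = opnorm A * (vnorm u)\<^sup>2" by (simp add: power2_eq_square)
  finally show ?thesis unfolding vnorm_sq .
qed

lemma opnorm_diag: "cmod (A i i) \<le> opnorm (A :: ('i::finite) op)"
proof -
  define e where "e = (\<lambda>j. if j = i then 1 else (0::complex))"
  have "vnorm e = 1"
  proof -
    have "(\<Sum>j\<in>UNIV. (cmod (e j))\<^sup>2) = (\<Sum>j\<in>UNIV. if j = i then 1 else 0)"
      by (intro sum.cong refl) (simp add: e_def)
    then show ?thesis unfolding vnorm_def by simp
  qed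
  then have "vnorm (mv A e) \<le> opnorm A" by (intro opnorm_upper) simp
  moreover have "mv A e i = A i i"
  proof -
    have "mv A e i = (\<Sum>j\<in>UNIV. if j = i then A i j else 0)"
      unfolding mv_def by (intro sum.cong refl) (simp add: e_def)
    then show ?thesis by simp
  qed
  ultimately show ?thesis using cmod_le_vnorm[of "mv A e" i] by simp
qed


lemma trace_star_bound:
  fixes S :: "((('la::finite \<times> 'a1::finite) \<times> ('b1::finite \<times> 'lb::finite))) op"
    and Q :: "((('a1 \<times> 'a2::finite) \<times> ('b2::finite \<times> 'b1))) op"
  assumes "psd S"
  shows "Re (tr (star S Q)) \<le> opnorm (ptrace_AB Q) * Re (tr S)"
proof -
  define M where "M = ptrace_AB Q"
  obtain n :: nat and \<sigma> where s: "\<And>i j. S i j = (\<Sum>k<n. \<sigma> k i * cnj (\<sigma> k j))"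
    using psd_decompU[OF assms] by blast
  define u where "u l k = (\<lambda>xy. cnj (\<sigma> k (gidx l xy)))" for l :: "'la \<times> 'lb" and k
  have "tr (star S Q) = (\<Sum>l\<in>UNIV. \<Sum>ab\<in>UNIV. star S Q (gidx l ab) (gidx l ab))"
    by (rule tr_split)
  also have "\<dots> = (\<Sum>l\<in>UNIV. \<Sum>ab\<in>UNIV. \<Sum>xy\<in>UNIV. \<Sum>xy'\<in>UNIV.
        S (gidx l xy) (gidx l xy') * Q (gidx xy ab) (gidx xy' ab))"
    unfolding star_def
    by (intro sum.cong refl) (simp add: gidx_def fS_def hQ_def)
  also have "\<dots> = (\<Sum>l\<in>UNIV. \<Sum>xy\<in>UNIV. \<Sum>xy'\<in>UNIV. \<Sum>ab\<in>UNIV.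
        S (gidx l xy) (gidx l xy') * Q (gidx xy ab) (gidx xy' ab))"
    by (rule sum.cong[OF refl], rule sum_swap3)
  also have "\<dots> = (\<Sum>l\<in>UNIV. \<Sum>xy\<in>UNIV. \<Sum>xy'\<in>UNIV. S (gidx l xy) (gidx l xy') * M xy xy')"
    unfolding M_def ptrace_gidx by (simp add: sum_distrib_left)
  also have "\<dots> = (\<Sum>l\<in>UNIV. \<Sum>xy\<in>UNIV. \<Sum>xy'\<in>UNIV. \<Sum>k<n. \<sigma> k (gidx l xy) * cnj (\<sigma> k (gidx l xy')) * M xy xy')"
    unfolding s by (simp add: sum_distrib_right)
  also have "\<dots> = (\<Sum>l\<in>UNIV. \<Sum>k<n. \<Sum>xy\<in>UNIV. \<Sum>xy'\<in>UNIV. \<sigma> k (gidx l xy) * cnj (\<sigma> k (gidx l xy')) * M xy xy')"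
    by (rule sum.cong[OF refl], rule sum_swap3[symmetric])
  also have "\<dots> = (\<Sum>l\<in>UNIV. \<Sum>k<n. qf UNIV M (u l k))"
    unfolding qf_def u_def by (intro sum.cong refl) (simp add: ac_simps)
  finally have e: "tr (star S Q) = (\<Sum>l\<in>UNIV. \<Sum>k<n. qf UNIV M (u l k))" .
  have "Re (tr (star S Q)) = (\<Sum>l\<in>UNIV. \<Sum>k<n. Re (qf UNIV M (u l k)))"
    unfolding e by (simp add: Re_sum)
  also have "\<dots> \<le> (\<Sum>l\<in>UNIV. \<Sum>k<n. opnorm M * (\<Sum>xy\<in>UNIV. (cmod (u l k xy))\<^sup>2))"
    by (intro sum_mono qf_opnorm)
  also have "\<dots> = opnorm M * (\<Sum>k<n. \<Sum>l\<in>UNIV. \<Sum>xy\<in>UNIV. (cmod (\<sigma> k (gidx l xy)))\<^sup>2)"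
    unfolding u_def by (simp add: sum_distrib_left sum.swap[of _ UNIV "{..<n}"])
  also have "\<dots> = opnorm M * (\<Sum>k<n. \<Sum>i\<in>UNIV. (cmod (\<sigma> k i))\<^sup>2)"
    by (simp add: sum_split4)
  also have "\<dots> = opnorm M * Re (tr S)"
  proof -
    have "Re (S i i) = (\<Sum>k<n. (cmod (\<sigma> k i))\<^sup>2)" for i
      unfolding s by (simp add: Re_sum complex_mult_cnj cmod_power2)
    then have "Re (tr S) = (\<Sum>i\<in>UNIV. \<Sum>k<n. (cmod (\<sigma> k i))\<^sup>2)"
      unfolding tr_def Re_sum by simp
    then show ?thesis by (simp add: sum.swap[of _ UNIV "{..<n}"])
  qed
  finally show ?thesis unfolding M_def .
qed


lemma sum_lt1: "(\<Sum>z\<in>{..<1::nat} \<times> A. f z) = (\<Sum>a\<in>A. f (0, a))"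
proof -
  have "{..<1::nat} \<times> A = Pair 0 ` A" by auto
  moreover have "inj_on (Pair (0::nat)) A" by (auto simp: inj_on_def)
  ultimately show ?thesis by (simp add: sum.reindex)
qed

lemma qf_lt1: "qf ({..<1::nat} \<times> A) Y v = qf A (\<lambda>p q. Y (0,p) (0,q)) (\<lambda>p. v (0,p))"
  unfolding qf_def sum_lt1 ..

lemma cp_pos:
  fixes N :: "('i::finite) op \<Rightarrow> ('o::finite) op"
  assumes "completely_positive N" "psd P"
  shows "psd (N P)"
proof -
  define X :: "(nat \<times> 'i) op" where "X = (\<lambda>(r,i) (r',j). P i j)"
  have "psd_on ({..<1} \<times> UNIV) X"
    unfolding psd_on_iff qf_lt1 using assms(2) unfolding psd_iff by (simp add: X_def)
  then have h: "psd_on ({..<1} \<times> UNIV) (\<lambda>(r, p) (r', p'). N (\<lambda>i j. X (r, i) (r', j)) p p')"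
    using assms(1) unfolding completely_positive_def by blast
  show ?thesis unfolding psd_iff
  proof
    fix w :: "'o \<Rightarrow> complex"
    have "0 \<le> qf ({..<1} \<times> UNIV) (\<lambda>(r, p) (r', p'). N (\<lambda>i j. X (r, i) (r', j)) p p') (\<lambda>(r,p). w p)"
      using h unfolding psd_on_iff by blast
    also have "qf ({..<1} \<times> UNIV) (\<lambda>(r, p) (r', p'). N (\<lambda>i j. X (r, i) (r', j)) p p') (\<lambda>(r,p). w p) = qf UNIV (N P) w"
      unfolding qf_lt1 by (simp add: X_def)
    finally show "0 \<le> qf UNIV (N P) w" .
  qed
qed

lemma psd_rank1: "psd (\<lambda>s t. u s * cnj (u t) :: complex)"
  using psd_gram[of "{()}" "\<lambda>_. u"] by simp

lemma psd_herm: "psd A \<Longrightarrow> A j i = cnj (A i j)"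
  using psd_on_herm[of UNIV A i j] unfolding psd_def by simp

lemma sum_two:
  fixes H :: "'i::finite \<Rightarrow> complex"
  shows "(\<Sum>s\<in>UNIV. ((if s = p then 1 else 0) + (if s = q then c else 0)) * H s) = H p + c * H q"
proof -
  have "(\<Sum>s\<in>UNIV. ((if s = p then 1 else 0) + (if s = q then c else 0)) * H s)
      = (\<Sum>s\<in>UNIV. (if s = p then H s else 0)) + (\<Sum>s\<in>UNIV. (if s = q then c * H s else 0))"
    unfolding sum.distrib[symmetric] by (intro sum.cong refl) (auto simp: algebra_simps)
  then show ?thesis by simp
qed

lemma N_rank1:
  fixes N :: "('i::finite) op \<Rightarrow> ('o::finite) op" and p q :: 'i and c :: complex
  assumes "linear_map N"
  defines "u \<equiv> (\<lambda>s. (if s = p then 1 else 0) + (if s = q then c else 0))"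
  shows "N (\<lambda>s t. u s * cnj (u t)) a b =
    N (Emat p p) a b + cnj c * N (Emat p q) a b + c * (N (Emat q p) a b + cnj c * N (Emat q q) a b)"
proof -
  have cu: "cnj (u t) = (if t = p then 1 else 0) + (if t = q then cnj c else 0)" for t
    by (simp add: u_def)
  have "N (\<lambda>s t. u s * cnj (u t)) a b = (\<Sum>s\<in>UNIV. \<Sum>t\<in>UNIV. u s * cnj (u t) * N (Emat s t) a b)"
    by (subst lin_expand[OF assms(1)]) simp
  also have "\<dots> = (\<Sum>s\<in>UNIV. u s * (\<Sum>t\<in>UNIV. cnj (u t) * N (Emat s t) a b))"
    by (simp add: sum_distrib_left mult.assoc)
  also have "\<dots> = (\<Sum>s\<in>UNIV. u s * (N (Emat s p) a b + cnj c * N (Emat s q) a b))"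
    unfolding cu sum_two ..
  also have "\<dots> = N (Emat p p) a b + cnj c * N (Emat p q) a b + c * (N (Emat q p) a b + cnj c * N (Emat q q) a b)"
    unfolding u_def sum_two ..
  finally show ?thesis .
qed

lemma herm_E:
  fixes N :: "('i::finite) op \<Rightarrow> ('o::finite) op"
  assumes lin: "linear_map N" and pos: "\<And>P. psd P \<Longrightarrow> psd (N P)"
  shows "N (Emat p q) j i = cnj (N (Emat q p) i j)"
proof -
  define u where "u c = (\<lambda>s. (if s = p then 1 else 0) + (if s = q then c else (0::complex)))" for c
  have H: "N (\<lambda>s t. u c s * cnj (u c t)) j i = cnj (N (\<lambda>s t. u c s * cnj (u c t)) i j)" for c
    by (rule psd_herm[OF pos[OF psd_rank1]])
  have R: "N (\<lambda>s t. u c s * cnj (u c t)) a b =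
    N (Emat p p) a b + cnj c * N (Emat p q) a b + c * (N (Emat q p) a b + cnj c * N (Emat q q) a b)" for a b c
    unfolding u_def by (rule N_rank1[OF lin])
  show ?thesis
  proof (cases "p = q")
    case True
    show ?thesis using H[of 0] R[where c=0] True by simp
  next
    case False
    have u0: "u 0 = (\<lambda>s. if s = p then 1 else 0)" by (simp add: u_def fun_eq_iff)
    have Pp: "N (Emat p p) j i = cnj (N (Emat p p) i j)" using H[of 0] R[where c=0] by simp
    have Pq: "N (Emat q q) j i = cnj (N (Emat q q) i j)"
    proof -
      define u' where "u' = (\<lambda>s. (if s = q then 1 else 0) + (if s = p then 0 else (0::complex)))"
      have "N (\<lambda>s t. u' s * cnj (u' t)) j i = cnj (N (\<lambda>s t. u' s * cnj (u' t)) i j)"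
        by (rule psd_herm[OF pos[OF psd_rank1]])
      moreover have "N (\<lambda>s t. u' s * cnj (u' t)) a b = N (Emat q q) a b" for a b
        using N_rank1[OF lin, of q p 0 a b] unfolding u'_def by simp
      ultimately show ?thesis by simp
    qed
    have e1: "N (Emat p q) j i + N (Emat q p) j i = cnj (N (Emat p q) i j) + cnj (N (Emat q p) i j)"
      using H[of 1] R[where c=1] Pp Pq by simp
    have e2: "N (Emat q p) j i - N (Emat p q) j i = cnj (N (Emat p q) i j) - cnj (N (Emat q p) i j)"
    proof -
      have h: "N (Emat p p) j i + cnj \<i> * N (Emat p q) j i + \<i> * (N (Emat q p) j i + cnj \<i> * N (Emat q q) j i) =
         cnj (N (Emat p p) i j + cnj \<i> * N (Emat p q) i j + \<i> * (N (Emat q p) i j + cnj \<i> * N (Emat q q) i j))"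
        using H[where c=\<i>] unfolding R[where c=\<i>] .
      then have "- \<i> * N (Emat p q) j i + \<i> * N (Emat q p) j i = \<i> * cnj (N (Emat p q) i j) - \<i> * cnj (N (Emat q p) i j)"
        unfolding Pp Pq by (simp add: complex_eq_iff)
      then have "\<i> * (N (Emat q p) j i - N (Emat p q) j i) = \<i> * (cnj (N (Emat p q) i j) - cnj (N (Emat q p) i j))"
        by (simp add: right_diff_distrib)
      then show ?thesis by simp
    qed
    define A' where "A' = N (Emat p q) j i"
    define B' where "B' = N (Emat q p) j i"
    define a where "a = cnj (N (Emat p q) i j)"
    define b where "b = cnj (N (Emat q p) i j)"
    have "A' = ((A' + B') - (B' - A')) / 2" by simp
    also have "\<dots> = ((a + b) - (a - b)) / 2" using e1 e2 by (simp add: A'_def B'_def a_def b_def)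
    also have "\<dots> = b" by simp
    finally show ?thesis by (simp add: A'_def b_def)
  qed
qed


definition herm :: "'i op \<Rightarrow> bool" where "herm X \<longleftrightarrow> (\<forall>i j. X j i = cnj (X i j))"

lemma psd_imp_herm: "psd X \<Longrightarrow> herm X"
  unfolding herm_def by (intro allI) (rule psd_herm)

lemma hermD: "herm X \<Longrightarrow> X j i = cnj (X i j)"
  unfolding herm_def by (drule spec[of _ i], drule spec[of _ j]) assumption

lemma herm_ptrans2: assumes "herm X" shows "herm (ptrans2 X)"
  unfolding herm_def
proof (intro allI)
  fix \<alpha> \<beta> :: "'a \<times> 'b"
  obtain c d where \<alpha>: "\<alpha> = (c, d)" by (metis prod.collapse)
  obtain c' d' where \<beta>: "\<beta> = (c', d')" by (metis prod.collapse)
  show "ptrans2 X \<beta> \<alpha> = cnj (ptrans2 X \<alpha> \<beta>)"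
    unfolding \<alpha> \<beta> ptrans2_def by (simp only: prod.case) (rule hermD[OF assms])
qed

lemma choi_herm:
  fixes N :: "(('a1::finite) \<times> ('b1::finite)) op \<Rightarrow> (('a2::finite) \<times> ('b2::finite)) op"
  assumes "linear_map N" "completely_positive N"
  shows "herm (choi N)"
  unfolding herm_def
proof (intro allI)
  fix \<alpha> \<beta> :: "('a1 \<times> 'a2) \<times> ('b2 \<times> 'b1)"
  obtain x a b y where \<alpha>: "\<alpha> = ((x,a),(b,y))" by (metis prod.collapse)
  obtain x' a' b' y' where \<beta>: "\<beta> = ((x',a'),(b',y'))" by (metis prod.collapse)
  show "choi N \<beta> \<alpha> = cnj (choi N \<alpha> \<beta>)"
    unfolding \<alpha> \<beta> choi_E
    by (rule herm_E[OF assms(1) cp_pos[OF assms(2)]])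
qed

definition idm :: "real \<Rightarrow> 'i op" where
  "idm c = (\<lambda>i j. if i = j then complex_of_real c else 0)"

lemma ptrans2_idm: "ptrans2 (idm c) = idm c"
  by (auto simp: fun_eq_iff ptrans2_def idm_def)

lemma qf_idm: "qf UNIV (idm c :: ('i::finite) op) v = complex_of_real (c * (\<Sum>i\<in>UNIV. (cmod (v i))\<^sup>2))"
proof -
  have "qf UNIV (idm c) v = (\<Sum>i\<in>UNIV. cnj (v i) * complex_of_real c * v i)"
    unfolding qf_def idm_def
  proof (intro sum.cong refl)
    fix i
    have "(\<Sum>j\<in>UNIV. cnj (v i) * (if i = j then complex_of_real c else 0) * v j) =
      (\<Sum>j\<in>UNIV. if j = i then cnj (v i) * complex_of_real c * v i else 0)"
      by (intro sum.cong refl) auto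
    then show "(\<Sum>j\<in>UNIV. cnj (v i) * (if i = j then complex_of_real c else 0) * v j) = cnj (v i) * complex_of_real c * v i"
      by simp
  qed
  also have "\<dots> = (\<Sum>i\<in>UNIV. complex_of_real (c * (cmod (v i))\<^sup>2))"
  proof (intro sum.cong refl)
    fix i
    have "cnj (v i) * v i = complex_of_real ((cmod (v i))\<^sup>2)"
      using complex_norm_square[of "v i"] by (simp only: mult.commute)
    then show "cnj (v i) * complex_of_real c * v i = complex_of_real (c * (cmod (v i))\<^sup>2)"
      by (metis mult.commute mult.left_commute of_real_mult)
  qed
  finally show ?thesis by (simp add: sum_distrib_left)
qed

lemma psd_idm: "0 \<le> c \<Longrightarrow> psd (idm c :: ('i::finite) op)"
  unfolding psd_iff qf_idm by (simp add: less_eq_complex_def sum_nonneg)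

lemma qf_herm_real:
  assumes "herm X" shows "Im (qf UNIV (X :: ('i::finite) op) v) = 0"
proof -
  have "cnj (qf UNIV X v) = (\<Sum>i\<in>UNIV. \<Sum>j\<in>UNIV. v i * X j i * cnj (v j))"
  proof -
    have hx: "cnj (X i j) = X j i" for i j using hermD[OF assms, of j i] by simp
    show ?thesis unfolding qf_def by (simp add: cnj_sum hx)
  qed
  also have "\<dots> = (\<Sum>j\<in>UNIV. \<Sum>i\<in>UNIV. v i * X j i * cnj (v j))" by (rule sum.swap)
  also have "\<dots> = qf UNIV X v" unfolding qf_def by (intro sum.cong refl) (simp add: ac_simps)
  finally have "cnj (qf UNIV X v) = qf UNIV X v" .
  then have "Im (cnj (qf UNIV X v)) = Im (qf UNIV X v)" by simp
  then show ?thesis by simp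
qed

lemma qf_abs_bound:
  "cmod (qf UNIV (X :: ('i::finite) op) v) \<le> (\<Sum>i\<in>UNIV. \<Sum>j\<in>UNIV. cmod (X i j)) * (\<Sum>k\<in>UNIV. (cmod (v k))\<^sup>2)"
proof -
  define V where "V = (\<Sum>k\<in>UNIV. (cmod (v k))\<^sup>2)"
  have sq: "(cmod (v i))\<^sup>2 \<le> V" for i
    unfolding V_def by (rule member_le_sum) auto
  have pr: "cmod (v i) * cmod (v j) \<le> V" for i j
  proof -
    have "2 * (cmod (v i) * cmod (v j)) \<le> (cmod (v i))\<^sup>2 + (cmod (v j))\<^sup>2"
      using sum_squares_bound[of "cmod (v i)" "cmod (v j)"] by (simp add: mult.assoc)
    then show ?thesis using sq[of i] sq[of j] by linarith
  qed
  have "cmod (qf UNIV X v) \<le> (\<Sum>i\<in>UNIV. \<Sum>j\<in>UNIV. cmod (cnj (v i) * X i j * v j))"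
    unfolding qf_def by (rule order_trans[OF norm_sum sum_mono[OF norm_sum]])
  also have "\<dots> \<le> (\<Sum>i\<in>UNIV. \<Sum>j\<in>UNIV. cmod (X i j) * V)"
  proof (intro sum_mono)
    fix i j
    have "cmod (cnj (v i) * X i j * v j) = cmod (X i j) * (cmod (v i) * cmod (v j))"
      by (simp add: norm_mult)
    also have "\<dots> \<le> cmod (X i j) * V" by (rule mult_left_mono[OF pr]) simp
    finally show "cmod (cnj (v i) * X i j * v j) \<le> cmod (X i j) * V" .
  qed
  also have "\<dots> = (\<Sum>i\<in>UNIV. \<Sum>j\<in>UNIV. cmod (X i j)) * V" by (simp add: sum_distrib_right)
  finally show ?thesis unfolding V_def .
qed

lemma herm_dom:
  fixes X :: "('i::finite) op"
  assumes "herm X"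
  defines "c \<equiv> (\<Sum>i\<in>UNIV. \<Sum>j\<in>UNIV. cmod (X i j))"
  shows "psd (idm c - X)" "psd (X - - idm c)"
proof -
  have c0: "0 \<le> c" unfolding c_def by (simp add: sum_nonneg)
  have b: "cmod (qf UNIV X v) \<le> c * (\<Sum>k\<in>UNIV. (cmod (v k))\<^sup>2)" for v
    unfolding c_def by (rule qf_abs_bound)
  have r: "\<bar>Re (qf UNIV X v)\<bar> \<le> c * (\<Sum>k\<in>UNIV. (cmod (v k))\<^sup>2)" for v
    using abs_Re_le_cmod[of "qf UNIV X v"] b[of v] by linarith
  have e1: "idm c - X = (\<lambda>i j. idm c i j - X i j)" by (simp add: fun_eq_iff)
  have e2: "X - - idm c = (\<lambda>i j. X i j + idm c i j)" by (simp add: fun_eq_iff)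
  show "psd (idm c - X)" unfolding psd_iff e1 qf_diff qf_idm
  proof
    fix v show "0 \<le> complex_of_real (c * (\<Sum>i\<in>UNIV. (cmod (v i))\<^sup>2)) - qf UNIV X v"
      using r[of v] qf_herm_real[OF assms(1), of v] by (simp add: less_eq_complex_def)
  qed
  show "psd (X - - idm c)" unfolding psd_iff e2 qf_add qf_idm
  proof
    fix v show "0 \<le> qf UNIV X v + complex_of_real (c * (\<Sum>i\<in>UNIV. (cmod (v i))\<^sup>2))"
      using r[of v] qf_herm_real[OF assms(1), of v] by (simp add: less_eq_complex_def)
  qed
qed

lemma tr_mono:
  assumes "psd (B - A)" shows "Re (tr (A :: ('i::finite) op)) \<le> Re (tr B)"
proof -
  have "0 \<le> (B - A) i i" for i using psd_on_diag[of UNIV "B - A" i] assms unfolding psd_def by simp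
  then have "0 \<le> Re (B i i) - Re (A i i)" for i by (simp add: less_eq_complex_def)
  then have "0 \<le> (\<Sum>i\<in>UNIV. Re (B i i) - Re (A i i))" by (simp add: sum_nonneg)
  then show ?thesis unfolding tr_def Re_sum sum_subtractf by simp
qed


definition feas :: "(('c::finite) \<times> ('d::finite)) op \<Rightarrow> ('c \<times> 'd) op \<Rightarrow> bool" where
  "feas X S \<longleftrightarrow> psd S \<and> loewner_le (- ptrans2 S) (ptrans2 X) \<and> loewner_le (ptrans2 X) (ptrans2 S)"

lemma W_kappa_alt: "W_kappa X = Inf {Re (tr S) | S. feas X S}"
  unfolding W_kappa_def feas_def ..

lemma feas_tr: "feas X S \<Longrightarrow> Re (tr X) \<le> Re (tr S)"
  unfolding feas_def loewner_le_def using tr_mono[of "ptrans2 S" "ptrans2 X"] tr_ptrans2 by metis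

lemma W_le: assumes "feas X S" shows "W_kappa X \<le> Re (tr S)"
  unfolding W_kappa_alt
proof (rule cInf_lower)
  show "Re (tr S) \<in> {Re (tr S) |S. feas X S}" using assms by blast
  show "bdd_below {Re (tr S) |S. feas X S}"
    by (rule bdd_belowI[of _ "Re (tr X)"]) (auto dest: feas_tr)
qed

lemma W_ge: assumes "feas X S0" shows "Re (tr X) \<le> W_kappa X"
  unfolding W_kappa_alt
  by (rule cInf_greatest) (use assms in \<open>auto dest: feas_tr\<close>)

lemma W_ge_bound: assumes "feas X S0" "\<And>S. feas X S \<Longrightarrow> z \<le> Re (tr S)" shows "z \<le> W_kappa X"
  unfolding W_kappa_alt
  by (rule cInf_greatest) (use assms in auto)

lemma feas_idm:
  assumes "herm X"
  shows "\<exists>S. feas X S"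
proof -
  define c where "c = (\<Sum>i\<in>UNIV. \<Sum>j\<in>UNIV. cmod (ptrans2 X i j))"
  have c0: "0 \<le> c" unfolding c_def by (simp add: sum_nonneg)
  have h: "herm (ptrans2 X)" by (rule herm_ptrans2[OF assms])
  have "feas X (idm c)"
    unfolding feas_def loewner_le_def ptrans2_idm
    using psd_idm[OF c0] herm_dom[OF h] unfolding c_def by simp
  then show ?thesis by blast
qed

lemma opnorm_ge_1:
  fixes N :: "(('a1::finite) \<times> ('b1::finite)) op \<Rightarrow> (('a2::finite) \<times> ('b2::finite)) op"
  assumes tp: "trace_preserving N" and fQ: "feas (choi N) Q"
  shows "1 \<le> opnorm (ptrace_AB Q)"
proof -
  define M where "M = ptrace_AB Q"
  define d where "d = real (card (UNIV :: ('a1 \<times> 'b1) set))"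
  have dpos: "d > 0" unfolding d_def by (simp add: card_gt_0_iff)
  have "d = Re (tr (choi N))" unfolding d_def tr_choi[OF tp] by simp
  also have "\<dots> \<le> Re (tr Q)" by (rule feas_tr[OF fQ])
  also have "\<dots> = Re (tr M)" unfolding M_def tr_ptrace ..
  also have "\<dots> = (\<Sum>l\<in>UNIV. Re (M l l))" unfolding tr_def by (simp add: Re_sum)
  also have "\<dots> \<le> (\<Sum>l\<in>(UNIV :: ('a1 \<times> 'b1) set). opnorm M)"
    by (intro sum_mono) (rule order_trans[OF complex_Re_le_cmod opnorm_diag])
  also have "\<dots> = d * opnorm M" unfolding d_def by simp
  finally have "d * 1 \<le> d * opnorm M" by simp
  then show ?thesis using dpos unfolding M_def by simp
qed

lemma Gamma_alt: "Gamma_kappa N = Inf {opnorm (ptrace_AB Q) | Q. feas (choi N) Q}"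
  unfolding Gamma_kappa_def feas_def ..

lemma Gamma_le:
  fixes N :: "(('a1::finite) \<times> ('b1::finite)) op \<Rightarrow> (('a2::finite) \<times> ('b2::finite)) op"
  assumes tp: "trace_preserving N" and fQ: "feas (choi N) Q"
  shows "Gamma_kappa N \<le> opnorm (ptrace_AB Q)"
  unfolding Gamma_alt
proof (rule cInf_lower)
  show "opnorm (ptrace_AB Q) \<in> {opnorm (ptrace_AB Q) | Q. feas (choi N) Q}" using fQ by blast
  show "bdd_below {opnorm (ptrace_AB Q) | Q. feas (choi N) Q}"
    by (rule bdd_belowI[of _ 1]) (auto dest: opnorm_ge_1[OF tp])
qed

lemma Gamma_ge_bound:
  fixes N :: "(('a1::finite) \<times> ('b1::finite)) op \<Rightarrow> (('a2::finite) \<times> ('b2::finite)) op"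
  assumes "feas (choi N) Q0" "\<And>Q. feas (choi N) Q \<Longrightarrow> z \<le> opnorm (ptrace_AB Q)"
  shows "z \<le> Gamma_kappa N"
  unfolding Gamma_alt by (rule cInf_greatest) (use assms in auto)

lemma feas_star:
  fixes N :: "(('a1::finite) \<times> ('b1::finite)) op \<Rightarrow> (('a2::finite) \<times> ('b2::finite)) op"
    and \<rho> S :: "((('la::finite) \<times> 'a1) \<times> ('b1 \<times> ('lb::finite))) op"
  assumes lin: "linear_map N" and fS: "feas \<rho> S" and fQ: "feas (choi N) Q"
  shows "feas (apply_bip N \<rho>) (star S Q)"
proof -
  have e: "ptrans2 (apply_bip N \<rho>) = star (ptrans2 \<rho>) (ptrans2 (choi N))"
    unfolding apply_bip_star[OF lin] ptrans2_star ..
  have a: "psd (ptrans2 S - ptrans2 \<rho>)" "psd (ptrans2 \<rho> - - ptrans2 S)"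
    using fS unfolding feas_def loewner_le_def by auto
  have b: "psd (ptrans2 Q - ptrans2 (choi N))" "psd (ptrans2 (choi N) - - ptrans2 Q)"
    using fQ unfolding feas_def loewner_le_def by auto
  have "psd S" "psd Q" using fS fQ unfolding feas_def by auto
  then show ?thesis
    unfolding feas_def loewner_le_def e ptrans2_star
    using psd_star feas_combine[OF a b] by blast
qed

theorem mainTheorem11:
  fixes \<rho> :: "((('la::finite) \<times> ('a1::finite)) \<times> (('b1::finite) \<times> ('lb::finite))) op"
    and N :: "('a1 \<times> 'b1) op \<Rightarrow> (('a2::finite) \<times> ('b2::finite)) op"
  assumes "is_state \<rho>"
    and "is_channel N"
  shows "E_kappa (apply_bip N \<rho>) \<le> E_kappa \<rho> + E_kappa_ch N"
proof -
  have lin: "linear_map N" and cp: "completely_positive N" and tp: "trace_preserving N"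
    using assms(2) unfolding is_channel_def by auto
  have psd\<rho>: "psd \<rho>" and tr\<rho>: "tr \<rho> = 1" using assms(1) unfolding is_state_def by auto
  define \<omega> where "\<omega> = apply_bip N \<rho>"
  have tr\<omega>: "tr \<omega> = 1" unfolding \<omega>_def tr_apply_bip[OF tp] by (rule tr\<rho>)
  obtain S0 where S0: "feas \<rho> S0" using feas_idm[OF psd_imp_herm[OF psd\<rho>]] by blast
  obtain Q0 where Q0: "feas (choi N) Q0" using feas_idm[OF choi_herm[OF lin cp]] by blast
  have SQ0: "feas \<omega> (star S0 Q0)" unfolding \<omega>_def by (rule feas_star[OF lin S0 Q0])
  define W\<rho> where "W\<rho> = W_kappa \<rho>"
  define W\<omega> where "W\<omega> = W_kappa \<omega>"
  define \<Gamma> where "\<Gamma> = Gamma_kappa N"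
  have W\<rho>1: "1 \<le> W\<rho>" using W_ge[OF S0] tr\<rho> unfolding W\<rho>_def by simp
  have W\<omega>1: "1 \<le> W\<omega>" using W_ge[OF SQ0] tr\<omega> unfolding W\<omega>_def by simp
  have \<Gamma>1: "1 \<le> \<Gamma>" unfolding \<Gamma>_def by (rule Gamma_ge_bound[OF Q0 opnorm_ge_1[OF tp]])
  have key: "W\<omega> \<le> opnorm (ptrace_AB Q) * Re (tr S)" if fS: "feas \<rho> S" and fQ: "feas (choi N) Q" for S Q
  proof -
    have "W\<omega> \<le> Re (tr (star S Q))" unfolding W\<omega>_def \<omega>_def by (rule W_le[OF feas_star[OF lin fS fQ]])
    also have "\<dots> \<le> opnorm (ptrace_AB Q) * Re (tr S)"
      by (rule trace_star_bound) (use fS in \<open>simp add: feas_def\<close>)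
    finally show ?thesis .
  qed
  have step1: "W\<omega> / W\<rho> \<le> opnorm (ptrace_AB Q)" if fQ: "feas (choi N) Q" for Q
  proof -
    have op1: "1 \<le> opnorm (ptrace_AB Q)" by (rule opnorm_ge_1[OF tp fQ])
    have "W\<omega> / opnorm (ptrace_AB Q) \<le> W\<rho>"
      unfolding W\<rho>_def
    proof (rule W_ge_bound[OF S0])
      fix S assume "feas \<rho> S"
      then show "W\<omega> / opnorm (ptrace_AB Q) \<le> Re (tr S)"
        using key[OF _ fQ] op1 by (simp add: divide_le_eq mult.commute)
    qed
    then show ?thesis using op1 W\<rho>1 by (simp add: divide_le_eq field_simps)
  qed
  have "W\<omega> / W\<rho> \<le> \<Gamma>" unfolding \<Gamma>_def by (rule Gamma_ge_bound[OF Q0 step1])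
  then have main: "W\<omega> \<le> W\<rho> * \<Gamma>" using W\<rho>1 by (simp add: divide_le_eq mult.commute)
  have "log 2 W\<omega> \<le> log 2 (W\<rho> * \<Gamma>)" using main W\<omega>1 by simp
  also have "\<dots> = log 2 W\<rho> + log 2 \<Gamma>" using W\<rho>1 \<Gamma>1 by (simp add: log_mult)
  finally show ?thesis
    unfolding E_kappa_def E_kappa_ch_def W\<rho>_def W\<omega>_def \<Gamma>_def \<omega>_def .
qed


end
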